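(* Let $G$ be a graph whose vertex set is partitioned among agents $1,\dots,m$ (agent $i$ owning $V_i$), and let $M_1$ and $M_2$ be two matchings of $G$. Then there exist two matchings $N_1$ and $N_2$ of $G$ such that for every agent $i$: (1) $|u_i(N_1)-u_i(N_2)|\le 2$, and (2) $u_i(N_1)+u_i(N_2)=u_i(M_1)+u_i(M_2)$.
   Context: For a matching $M$ of $G$ and an agent $i$, $u_i(M)$ denotes the number of vertices of $V_i$ covered by $M$. *)

theory Defs
  imports Main
begin

definition graph :: "'a set \<Rightarrow> 'a set set \<Rightarrow> bool" where
  "graph V E \<longleftrightarrow> finite V \<and> (\<forall>e\<in>E. e \<subseteq> V \<and> card e = 2)"

definition matching :: "'a set set \<Rightarrow> 'a set set \<Rightarrow> bool" where
  "matching E M \<longleftrightarrow> M \<subseteq> E \<and> (\<forall>e1\<in>M. \<forall>e2\<in>M. e1 \<noteq> e2 \<longrightarrow> e1 \<inter> e2 = {})"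

definition agent_partition :: "'a set \<Rightarrow> nat \<Rightarrow> (nat \<Rightarrow> 'a set) \<Rightarrow> bool" where
  "agent_partition V m Vs \<longleftrightarrow>
     (\<Union>i\<in>{1..m}. Vs i) = V \<and>
     (\<forall>i\<in>{1..m}. \<forall>j\<in>{1..m}. i \<noteq> j \<longrightarrow> Vs i \<inter> Vs j = {})"

definition utility :: "'a set \<Rightarrow> 'a set set \<Rightarrow> nat" where
  "utility Vi M = card (Vi \<inter> \<Union>M)"

end

theory Submission
  imports Defs
begin

definition cov :: "'a set set \<Rightarrow> 'a \<Rightarrow> int" where
  "cov N v = (if v \<in> \<Union>N then 1 else 0)"

definition sg :: "'a set set \<Rightarrow> 'a set set \<Rightarrow> 'a \<Rightarrow> int" where
  "sg N1 N2 v = cov N1 v - cov N2 v"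

definition goodP :: "(nat \<Rightarrow> 'a set) \<Rightarrow> nat \<Rightarrow> 'a set set \<Rightarrow> 'a set set \<Rightarrow> 'a set set \<Rightarrow> bool" where
  "goodP Vs m N1 N2 P \<longleftrightarrow>
     (\<forall>p\<in>P. \<exists>x y i. p = {x,y} \<and> x \<noteq> y \<and> i \<in> {1..m} \<and> x \<in> Vs i \<and> y \<in> Vs i \<and>
        sg N1 N2 x \<noteq> 0 \<and> sg N1 N2 x + sg N1 N2 y = 0) \<and>
     (\<forall>p\<in>P. \<forall>q\<in>P. p \<noteq> q \<longrightarrow> p \<inter> q = {})"

lemma matching_one: "matching E N \<Longrightarrow> e \<in> N \<Longrightarrow> f \<in> N \<Longrightarrow> v \<in> e \<Longrightarrow> v \<in> f \<Longrightarrow> e = f"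
  unfolding matching_def by blast

lemma flip_cov:
  assumes cl: "\<forall>f \<in> N1 \<union> N2 \<union> P. f \<inter> \<Union>K \<noteq> {} \<longrightarrow> f \<in> K"
  shows "v \<in> \<Union>((N1 - K) \<union> (N2 \<inter> K)) \<longleftrightarrow> (if v \<in> \<Union>K then v \<in> \<Union>N2 else v \<in> \<Union>N1)"
proof (cases "v \<in> \<Union>K")
  case True
  have "v \<in> \<Union>N2" if "v \<in> \<Union>((N1 - K) \<union> (N2 \<inter> K))"
  proof -
    from that obtain e where e: "e \<in> (N1 - K) \<union> (N2 \<inter> K)" "v \<in> e" by blast
    show ?thesis
    proof (cases "e \<in> N1 - K")
      case True
      then have "e \<inter> \<Union>K \<noteq> {}" using e(2) \<open>v \<in> \<Union>K\<close> by blast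
      then have "e \<in> K" using cl True by blast
      then show ?thesis using True by blast
    next
      case False
      then show ?thesis using e by blast
    qed
  qed
  moreover have "v \<in> \<Union>((N1 - K) \<union> (N2 \<inter> K))" if "v \<in> \<Union>N2"
  proof -
    from that obtain e where e: "e \<in> N2" "v \<in> e" by blast
    then have "e \<inter> \<Union>K \<noteq> {}" using \<open>v \<in> \<Union>K\<close> by blast
    then have "e \<in> K" using cl e by blast
    then show ?thesis using e by blast
  qed
  ultimately show ?thesis using True by (simp only: if_True) blast
next
  case False
  have "v \<in> \<Union>N1" if "v \<in> \<Union>((N1 - K) \<union> (N2 \<inter> K))"
  proof -
    from that obtain e where e: "e \<in> (N1 - K) \<union> (N2 \<inter> K)" "v \<in> e" by blast
    have "e \<notin> K" using e(2) False by blast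
    then show ?thesis using e by blast
  qed
  moreover have "v \<in> \<Union>((N1 - K) \<union> (N2 \<inter> K))" if "v \<in> \<Union>N1"
  proof -
    from that obtain e where e: "e \<in> N1" "v \<in> e" by blast
    have "e \<notin> K" using e(2) False by blast
    then show ?thesis using e by blast
  qed
  ultimately show ?thesis using False by (simp only: if_False) blast
qed

lemma flip:
  assumes m1: "matching E N1" and m2: "matching E N2" and gP: "goodP Vs m N1 N2 P"
    and KH: "K \<subseteq> N1 \<union> N2 \<union> P" and cl: "\<forall>f \<in> N1 \<union> N2 \<union> P. f \<inter> \<Union>K \<noteq> {} \<longrightarrow> f \<in> K"
  shows "matching E ((N1 - K) \<union> (N2 \<inter> K))" "matching E ((N2 - K) \<union> (N1 \<inter> K))"
    "((N1 - K) \<union> (N2 \<inter> K)) \<union> ((N2 - K) \<union> (N1 \<inter> K)) = N1 \<union> N2"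
    "((N1 - K) \<union> (N2 \<inter> K)) \<inter> ((N2 - K) \<union> (N1 \<inter> K)) = N1 \<inter> N2"
    "\<forall>v. sg ((N1 - K) \<union> (N2 \<inter> K)) ((N2 - K) \<union> (N1 \<inter> K)) v = (if v \<in> \<Union>K then - sg N1 N2 v else sg N1 N2 v)"
    "goodP Vs m ((N1 - K) \<union> (N2 \<inter> K)) ((N2 - K) \<union> (N1 \<inter> K)) P"
proof -
  have c1: "\<And>v. v \<in> \<Union>((N1 - K) \<union> (N2 \<inter> K)) \<longleftrightarrow> (if v \<in> \<Union>K then v \<in> \<Union>N2 else v \<in> \<Union>N1)"
    by (rule flip_cov[OF cl])
  have cl': "\<forall>f \<in> N2 \<union> N1 \<union> P. f \<inter> \<Union>K \<noteq> {} \<longrightarrow> f \<in> K" using cl by blast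
  have c2: "\<And>v. v \<in> \<Union>((N2 - K) \<union> (N1 \<inter> K)) \<longleftrightarrow> (if v \<in> \<Union>K then v \<in> \<Union>N1 else v \<in> \<Union>N2)"
    by (rule flip_cov[OF cl'])
  have cv1: "\<And>v. cov ((N1 - K) \<union> (N2 \<inter> K)) v = (if v \<in> \<Union>K then cov N2 v else cov N1 v)"
    unfolding cov_def c1 by simp
  have cv2: "\<And>v. cov ((N2 - K) \<union> (N1 \<inter> K)) v = (if v \<in> \<Union>K then cov N1 v else cov N2 v)"
    unfolding cov_def c2 by simp
  show sgf: "\<forall>v. sg ((N1 - K) \<union> (N2 \<inter> K)) ((N2 - K) \<union> (N1 \<inter> K)) v = (if v \<in> \<Union>K then - sg N1 N2 v else sg N1 N2 v)"
    unfolding sg_def cv1 cv2 by simp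
  show "matching E ((N1 - K) \<union> (N2 \<inter> K))"
    unfolding matching_def
  proof (intro conjI ballI impI)
    show "(N1 - K) \<union> (N2 \<inter> K) \<subseteq> E" using m1 m2 unfolding matching_def by blast
  next
    fix e1 e2 assume e1: "e1 \<in> (N1 - K) \<union> (N2 \<inter> K)" and e2: "e2 \<in> (N1 - K) \<union> (N2 \<inter> K)" and ne: "e1 \<noteq> e2"
    show "e1 \<inter> e2 = {}"
    proof (rule ccontr)
      assume h: "e1 \<inter> e2 \<noteq> {}"
      obtain v where v: "v \<in> e1" "v \<in> e2" using h by blast
      have d1: "\<And>a b. a \<in> N1 \<Longrightarrow> b \<in> N1 \<Longrightarrow> v \<in> a \<Longrightarrow> v \<in> b \<Longrightarrow> a = b"
        using matching_one[OF m1] by blast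
      have d2: "\<And>a b. a \<in> N2 \<Longrightarrow> b \<in> N2 \<Longrightarrow> v \<in> a \<Longrightarrow> v \<in> b \<Longrightarrow> a = b"
        using matching_one[OF m2] by blast
      have t: "\<And>a b. a \<in> N1 - K \<Longrightarrow> b \<in> K \<Longrightarrow> v \<in> a \<Longrightarrow> v \<in> b \<Longrightarrow> False"
      proof -
        fix a b assume "a \<in> N1 - K" "b \<in> K" "v \<in> a" "v \<in> b"
        then have "a \<inter> \<Union>K \<noteq> {}" by blast
        then have "a \<in> K" using cl \<open>a \<in> N1 - K\<close> by blast
        then show False using \<open>a \<in> N1 - K\<close> by blast
      qed
      show False
      proof (cases "e1 \<in> N1 - K")
        case True
        show False
        proof (cases "e2 \<in> N1 - K")
          case True2: True
          then show False using d1 True v ne by blast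
        next
          case False
          then have "e2 \<in> K" using e2 by blast
          then show False using t True v by blast
        qed
      next
        case False
        then have e1K: "e1 \<in> N2 \<inter> K" using e1 by blast
        show False
        proof (cases "e2 \<in> N1 - K")
          case True
          then show False using t e1K v by blast
        next
          case False
          then have "e2 \<in> N2 \<inter> K" using e2 by blast
          then show False using d2 e1K v ne by blast
        qed
      qed
    qed
  qed
  show "matching E ((N2 - K) \<union> (N1 \<inter> K))"
    unfolding matching_def
  proof (intro conjI ballI impI)
    show "(N2 - K) \<union> (N1 \<inter> K) \<subseteq> E" using m1 m2 unfolding matching_def by blast
  next
    fix e1 e2 assume e1: "e1 \<in> (N2 - K) \<union> (N1 \<inter> K)" and e2: "e2 \<in> (N2 - K) \<union> (N1 \<inter> K)" and ne: "e1 \<noteq> e2"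
    show "e1 \<inter> e2 = {}"
    proof (rule ccontr)
      assume h: "e1 \<inter> e2 \<noteq> {}"
      obtain v where v: "v \<in> e1" "v \<in> e2" using h by blast
      have d1: "\<And>a b. a \<in> N2 \<Longrightarrow> b \<in> N2 \<Longrightarrow> v \<in> a \<Longrightarrow> v \<in> b \<Longrightarrow> a = b"
        using matching_one[OF m2] by blast
      have d2: "\<And>a b. a \<in> N1 \<Longrightarrow> b \<in> N1 \<Longrightarrow> v \<in> a \<Longrightarrow> v \<in> b \<Longrightarrow> a = b"
        using matching_one[OF m1] by blast
      have t: "\<And>a b. a \<in> N2 - K \<Longrightarrow> b \<in> K \<Longrightarrow> v \<in> a \<Longrightarrow> v \<in> b \<Longrightarrow> False"
      proof -
        fix a b assume "a \<in> N2 - K" "b \<in> K" "v \<in> a" "v \<in> b"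
        then have "a \<inter> \<Union>K \<noteq> {}" by blast
        then have "a \<in> K" using cl \<open>a \<in> N2 - K\<close> by blast
        then show False using \<open>a \<in> N2 - K\<close> by blast
      qed
      show False
      proof (cases "e1 \<in> N2 - K")
        case True
        show False
        proof (cases "e2 \<in> N2 - K")
          case True2: True
          then show False using d1 True v ne by blast
        next
          case False
          then have "e2 \<in> K" using e2 by blast
          then show False using t True v by blast
        qed
      next
        case False
        then have e1K: "e1 \<in> N1 \<inter> K" using e1 by blast
        show False
        proof (cases "e2 \<in> N2 - K")
          case True
          then show False using t e1K v by blast
        next
          case False
          then have "e2 \<in> N1 \<inter> K" using e2 by blast
          then show False using d2 e1K v ne by blast
        qed
      qed
    qed
  qed
  show "((N1 - K) \<union> (N2 \<inter> K)) \<union> ((N2 - K) \<union> (N1 \<inter> K)) = N1 \<union> N2" by blast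
  show "((N1 - K) \<union> (N2 \<inter> K)) \<inter> ((N2 - K) \<union> (N1 \<inter> K)) = N1 \<inter> N2" by blast
  show "goodP Vs m ((N1 - K) \<union> (N2 \<inter> K)) ((N2 - K) \<union> (N1 \<inter> K)) P"
    unfolding goodP_def
  proof (intro conjI ballI)
    fix p assume pP: "p \<in> P"
    have g1: "\<forall>p\<in>P. \<exists>x y i. p = {x,y} \<and> x \<noteq> y \<and> i \<in> {1..m} \<and> x \<in> Vs i \<and> y \<in> Vs i \<and>
        sg N1 N2 x \<noteq> 0 \<and> sg N1 N2 x + sg N1 N2 y = 0" using gP unfolding goodP_def by (rule conjunct1)
    obtain x y i where p: "p = {x,y}" "x \<noteq> y" "i \<in> {1..m}" "x \<in> Vs i" "y \<in> Vs i"
        "sg N1 N2 x \<noteq> 0" "sg N1 N2 x + sg N1 N2 y = 0"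
      using bspec[OF g1 pP] by (elim exE conjE)
    have pH: "p \<in> N1 \<union> N2 \<union> P" using pP by blast
    have iff: "x \<in> \<Union>K \<longleftrightarrow> y \<in> \<Union>K"
    proof
      assume "x \<in> \<Union>K"
      then have "p \<inter> \<Union>K \<noteq> {}" using p(1) by blast
      then have "p \<in> K" using cl pH by blast
      then show "y \<in> \<Union>K" using p(1) by blast
    next
      assume "y \<in> \<Union>K"
      then have "p \<inter> \<Union>K \<noteq> {}" using p(1) by blast
      then have "p \<in> K" using cl pH by blast
      then show "x \<in> \<Union>K" using p(1) by blast
    qed
    let ?s = "sg ((N1 - K) \<union> (N2 \<inter> K)) ((N2 - K) \<union> (N1 \<inter> K))"
    have sx: "?s x = (if x \<in> \<Union>K then - sg N1 N2 x else sg N1 N2 x)" using sgf by blast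
    have sy: "?s y = (if x \<in> \<Union>K then - sg N1 N2 y else sg N1 N2 y)" using sgf iff by simp
    have "?s x \<noteq> 0 \<and> ?s x + ?s y = 0"
      using p(6,7) sx sy by (cases "x \<in> \<Union>K") simp_all
    then show "\<exists>x y i. p = {x,y} \<and> x \<noteq> y \<and> i \<in> {1..m} \<and> x \<in> Vs i \<and> y \<in> Vs i \<and>
        ?s x \<noteq> 0 \<and> ?s x + ?s y = 0"
      using p(1-5) by blast
  next
    fix p q assume "p \<in> P" "q \<in> P"
    then show "p \<noteq> q \<longrightarrow> p \<inter> q = {}" using gP unfolding goodP_def by blast
  qed
qed

lemma handshake:
  assumes "finite K" "\<forall>e\<in>K. finite e"
  shows "(\<Sum>v\<in>\<Union>K. card {e\<in>K. v\<in>e}) = (\<Sum>e\<in>K. card e)"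
proof -
  have fU: "finite (\<Union>K)" using assms by (intro finite_Union) auto
  have "(\<Sum>v\<in>\<Union>K. card {e\<in>K. v\<in>e}) = (\<Sum>v\<in>\<Union>K. \<Sum>e\<in>K. of_bool (v \<in> e)::nat)"
  proof (rule sum.cong[OF refl])
    fix v
    have "(\<Sum>e\<in>K. of_bool (v \<in> e)::nat) = card (K \<inter> {e. v \<in> e})"
      using assms(1) by simp
    also have "K \<inter> {e. v \<in> e} = {e\<in>K. v\<in>e}" by blast
    finally show "card {e\<in>K. v\<in>e} = (\<Sum>e\<in>K. of_bool (v \<in> e)::nat)" by simp
  qed
  also have "\<dots> = (\<Sum>e\<in>K. \<Sum>v\<in>\<Union>K. of_bool (v \<in> e)::nat)"
    by (rule sum.swap)
  also have "\<dots> = (\<Sum>e\<in>K. card e)"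
  proof (rule sum.cong[OF refl])
    fix e assume "e \<in> K"
    then have "\<Union>K \<inter> {v. v \<in> e} = e" by blast
    moreover have "(\<Sum>v\<in>\<Union>K. of_bool (v \<in> e)::nat) = card (\<Union>K \<inter> {v. v \<in> e})"
      using fU by simp
    ultimately show "(\<Sum>v\<in>\<Union>K. of_bool (v \<in> e)::nat) = card e" by simp
  qed
  finally show ?thesis .
qed

lemma three_endpoints:
  assumes fK: "finite K" and c2: "\<forall>e\<in>K. card e = 2" and cu: "card (\<Union>K) \<le> card K + 1"
    and dg: "\<forall>v\<in>\<Union>K. card {e\<in>K. v\<in>e} \<le> 2"
    and xyz: "x \<in> \<Union>K" "y \<in> \<Union>K" "z \<in> \<Union>K" "x \<noteq> y" "y \<noteq> z" "x \<noteq> z"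
    and d1: "card {e\<in>K. x\<in>e} = 1" "card {e\<in>K. y\<in>e} = 1" "card {e\<in>K. z\<in>e} = 1"
  shows False
proof -
  have fe: "\<forall>e\<in>K. finite e" using c2 by (metis card.infinite zero_neq_numeral)
  have fU: "finite (\<Union>K)" using fK fe by (intro finite_Union) auto
  let ?d = "\<lambda>v. card {e\<in>K. v\<in>e}"
  have hs: "(\<Sum>v\<in>\<Union>K. ?d v) = 2 * card K"
    using handshake[OF fK fe] c2 by simp
  have S: "{x,y,z} \<subseteq> \<Union>K" using xyz by blast
  have "(\<Sum>v\<in>\<Union>K. ?d v) = (\<Sum>v\<in>{x,y,z}. ?d v) + (\<Sum>v\<in>\<Union>K - {x,y,z}. ?d v)"
    using sum.subset_diff[OF S fU] by (simp add: add.commute)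
  also have "(\<Sum>v\<in>{x,y,z}. ?d v) = 3" using xyz d1 by simp
  also have "(\<Sum>v\<in>\<Union>K - {x,y,z}. ?d v) \<le> (\<Sum>v\<in>\<Union>K - {x,y,z}. 2)"
    by (rule sum_mono) (use dg in blast)
  also have "(\<Sum>v\<in>\<Union>K - {x,y,z}. (2::nat)) = 2 * (card (\<Union>K) - 3)"
    using card_Diff_subset[OF _ S] xyz fU by simp
  finally have "2 * card K \<le> 3 + 2 * (card (\<Union>K) - 3)" using hs by simp
  moreover have "card {x,y,z} \<le> card (\<Union>K)" using card_mono[OF fU S] .
  moreover have "card {x,y,z} = 3" using xyz by simp
  ultimately show False using cu by linarith
qed

definition valid :: "'a set set \<Rightarrow> (nat \<Rightarrow> 'a set) \<Rightarrow> nat \<Rightarrow> 'a set set \<Rightarrow> 'a set set \<Rightarrow> 'a set set \<Rightarrow> 'a set set \<Rightarrow> 'a set set \<Rightarrow> bool" where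
  "valid E Vs m M1 M2 N1 N2 P \<longleftrightarrow> matching E N1 \<and> matching E N2 \<and> N1 \<union> N2 = M1 \<union> M2 \<and>
     N1 \<inter> N2 = M1 \<inter> M2 \<and> goodP Vs m N1 N2 P"

lemma card_le1:
  assumes "finite A" "\<forall>a\<in>A. \<forall>b\<in>A. a = b" shows "card A \<le> 1"
  using card_le_Suc0_iff_eq[OF assms(1)] assms(2) by simp

lemma goodP_pair:
  assumes "goodP Vs m N1 N2 P" "p \<in> P"
  obtains x y i where "p = {x,y}" "x \<noteq> y" "i \<in> {1..m}" "x \<in> Vs i" "y \<in> Vs i"
        "sg N1 N2 x \<noteq> 0" "sg N1 N2 x + sg N1 N2 y = 0"
proof -
  have g1: "\<forall>p\<in>P. \<exists>x y i. p = {x,y} \<and> x \<noteq> y \<and> i \<in> {1..m} \<and> x \<in> Vs i \<and> y \<in> Vs i \<and>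
        sg N1 N2 x \<noteq> 0 \<and> sg N1 N2 x + sg N1 N2 y = 0" using assms(1) unfolding goodP_def by (rule conjunct1)
  show ?thesis using bspec[OF g1 assms(2)] by (elim exE conjE) (rule that, assumption+)
qed

lemma goodP_disj:
  assumes "goodP Vs m N1 N2 P" "p \<in> P" "q \<in> P" "p \<noteq> q" shows "p \<inter> q = {}"
  using conjunct2[OF assms(1)[unfolded goodP_def]] assms(2-4) by blast

lemma goodP_sub:
  assumes "goodP Vs m N1 N2 P" "agent_partition V m Vs"
  shows "P \<subseteq> Pow V"
proof
  fix p assume "p \<in> P"
  then obtain x y i where "p = {x,y}" "x \<noteq> y" "i \<in> {1..m}" "x \<in> Vs i" "y \<in> Vs i"
        "sg N1 N2 x \<noteq> 0" "sg N1 N2 x + sg N1 N2 y = 0"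
    by (rule goodP_pair[OF assms(1)])
  moreover have "Vs i \<subseteq> V" using assms(2) \<open>i \<in> {1..m}\<close> unfolding agent_partition_def by blast
  ultimately show "p \<in> Pow V" by blast
qed

lemma matching_sub: "graph V E \<Longrightarrow> matching E N \<Longrightarrow> N \<subseteq> Pow V"
  unfolding graph_def matching_def by blast

lemma sgP_nz:
  assumes "goodP Vs m N1 N2 P" "p \<in> P" "v \<in> p"
  shows "sg N1 N2 v \<noteq> 0"
proof -
  obtain x y i where "p = {x,y}" "x \<noteq> y" "i \<in> {1..m}" "x \<in> Vs i" "y \<in> Vs i"
        "sg N1 N2 x \<noteq> 0" "sg N1 N2 x + sg N1 N2 y = 0"
    by (rule goodP_pair[OF assms(1,2)])
  then show ?thesis using assms(3) by auto
qed

lemma sg_nz_one: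
  assumes "matching E N1" "matching E N2" "sg N1 N2 v \<noteq> 0" "e \<in> N1 \<union> N2" "f \<in> N1 \<union> N2" "v \<in> e" "v \<in> f"
  shows "e = f"
proof -
  have "\<not> (v \<in> \<Union>N1 \<and> v \<in> \<Union>N2)"
  proof
    assume "v \<in> \<Union>N1 \<and> v \<in> \<Union>N2"
    then have "sg N1 N2 v = 0" unfolding sg_def cov_def by (simp only: if_True)
    then show False using assms(3) by simp
  qed
  then have nb: "\<not> (e \<in> N1 \<and> f \<in> N2)" "\<not> (e \<in> N2 \<and> f \<in> N1)" using assms(6,7) by blast+
  show ?thesis
  proof (cases "e \<in> N1")
    case True
    then have "f \<in> N1" using nb assms(5) by blast
    then show ?thesis using matching_one[OF assms(1) True _ assms(6,7)] by blast
  next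
    case False
    then have e2: "e \<in> N2" using assms(4) by blast
    then have "f \<in> N2" using nb assms(5) by blast
    then show ?thesis using matching_one[OF assms(2) e2 _ assms(6,7)] by blast
  qed
qed

lemma deg1:
  assumes "matching E N1" "matching E N2" "sg N1 N2 v \<noteq> 0" "v \<notin> \<Union>P"
    "K \<subseteq> N1 \<union> N2 \<union> P" "finite K" "v \<in> \<Union>K"
  shows "card {e\<in>K. v\<in>e} = 1"
proof -
  obtain e where e: "e \<in> K" "v \<in> e" using assms(7) by blast
  have "{e\<in>K. v\<in>e} = {e}"
  proof (intro equalityI subsetI)
    fix f assume "f \<in> {e\<in>K. v\<in>e}"
    then have "f \<in> N1 \<union> N2" "v \<in> f" using assms(4,5) by blast+
    moreover have "e \<in> N1 \<union> N2" using e assms(4,5) by blast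
    ultimately have "f = e" using sg_nz_one[OF assms(1-3), of f e] e(2) by blast
    then show "f \<in> {e}" by simp
  qed (use e in blast)
  then show ?thesis by simp
qed

lemma deg2:
  assumes "matching E N1" "matching E N2" "goodP Vs m N1 N2 P"
    "K \<subseteq> N1 \<union> N2 \<union> P" "finite K"
  shows "card {e\<in>K. v\<in>e} \<le> 2"
proof (cases "v \<in> \<Union>P")
  case True
  then obtain p where p: "p \<in> P" "v \<in> p" by blast
  have nz: "sg N1 N2 v \<noteq> 0" using sgP_nz[OF assms(3) p] .
  have sub: "{e\<in>K. v\<in>e} \<subseteq> {p} \<union> {e\<in>K. v\<in>e \<and> e \<in> N1 \<union> N2}"
  proof
    fix f assume f: "f \<in> {e\<in>K. v\<in>e}"
    show "f \<in> {p} \<union> {e\<in>K. v\<in>e \<and> e \<in> N1 \<union> N2}"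
    proof (cases "f \<in> P")
      case True
      then have "f = p" using goodP_disj[OF assms(3) True p(1)] f p(2) by blast
      then show ?thesis by blast
    next
      case False
      then show ?thesis using f assms(4) by blast
    qed
  qed
  have c1: "card {e\<in>K. v\<in>e \<and> e \<in> N1 \<union> N2} \<le> 1"
    by (rule card_le1) (use assms(5) sg_nz_one[OF assms(1,2) nz] in auto)
  have "card {e\<in>K. v\<in>e} \<le> card ({p} \<union> {e\<in>K. v\<in>e \<and> e \<in> N1 \<union> N2})"
    by (rule card_mono) (use assms(5) sub in auto)
  also have "\<dots> \<le> card {p} + card {e\<in>K. v\<in>e \<and> e \<in> N1 \<union> N2}" by (rule card_Un_le)
  finally show ?thesis using c1 by simp
next
  case False
  have sub: "{e\<in>K. v\<in>e} \<subseteq> {e\<in>K. v\<in>e \<and> e \<in> N1} \<union> {e\<in>K. v\<in>e \<and> e \<in> N2}"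
    using False assms(4) by blast
  have c1: "card {e\<in>K. v\<in>e \<and> e \<in> N1} \<le> 1"
    by (rule card_le1) (use assms(5) matching_one[OF assms(1)] in auto)
  have c2: "card {e\<in>K. v\<in>e \<and> e \<in> N2} \<le> 1"
    by (rule card_le1) (use assms(5) matching_one[OF assms(2)] in auto)
  have "card {e\<in>K. v\<in>e} \<le> card ({e\<in>K. v\<in>e \<and> e \<in> N1} \<union> {e\<in>K. v\<in>e \<and> e \<in> N2})"
    by (rule card_mono) (use assms(5) sub in auto)
  also have "\<dots> \<le> card {e\<in>K. v\<in>e \<and> e \<in> N1} + card {e\<in>K. v\<in>e \<and> e \<in> N2}" by (rule card_Un_le)
  finally show ?thesis using c1 c2 by simp
qed

lemma add_pair:
  assumes "valid E Vs m M1 M2 N1 N2 P" "finite P" "x \<notin> \<Union>P" "y \<notin> \<Union>P" "x \<noteq> y" "i \<in> {1..m}"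
    "x \<in> Vs i" "y \<in> Vs i" "sg N1 N2 x \<noteq> 0" "sg N1 N2 x + sg N1 N2 y = 0"
  shows "valid E Vs m M1 M2 N1 N2 (insert {x,y} P)" "card (insert {x,y} P) = Suc (card P)"
proof -
  have nP: "{x,y} \<notin> P" using assms(3) by blast
  then show "card (insert {x,y} P) = Suc (card P)" using assms(2) by simp
  have g: "goodP Vs m N1 N2 P" using assms(1) unfolding valid_def by blast
  have "goodP Vs m N1 N2 (insert {x,y} P)"
    unfolding goodP_def
  proof (intro conjI ballI)
    fix p assume "p \<in> insert {x,y} P"
    then show "\<exists>x y i. p = {x,y} \<and> x \<noteq> y \<and> i \<in> {1..m} \<and> x \<in> Vs i \<and> y \<in> Vs i \<and>
        sg N1 N2 x \<noteq> 0 \<and> sg N1 N2 x + sg N1 N2 y = 0"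
    proof
      assume "p = {x,y}"
      then show ?thesis using assms(5-10) by blast
    next
      assume "p \<in> P"
      then obtain a b j where "p = {a,b}" "a \<noteq> b" "j \<in> {1..m}" "a \<in> Vs j" "b \<in> Vs j"
        "sg N1 N2 a \<noteq> 0" "sg N1 N2 a + sg N1 N2 b = 0" by (rule goodP_pair[OF g])
      then show ?thesis by blast
    qed
  next
    fix p q assume "p \<in> insert {x,y} P" "q \<in> insert {x,y} P"
    then show "p \<noteq> q \<longrightarrow> p \<inter> q = {}" using goodP_disj[OF g] assms(3,4) by blast
  qed
  then show "valid E Vs m M1 M2 N1 N2 (insert {x,y} P)" using assms(1) unfolding valid_def by blast
qed

lemma no_opp:
  assumes ap: "agent_partition V m Vs" and gr: "graph V E"
    and v: "valid E Vs m M1 M2 N1 N2 P"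
    and mx: "\<forall>N1' N2' P'. valid E Vs m M1 M2 N1' N2' P' \<longrightarrow> card P' \<le> card P"
    and xy: "x \<notin> \<Union>P" "y \<notin> \<Union>P" "i \<in> {1..m}" "x \<in> Vs i" "y \<in> Vs i"
    "sg N1 N2 x = 1" "sg N1 N2 y = -1"
  shows False
proof -
  have "finite P" using goodP_sub[OF _ ap] v gr unfolding valid_def graph_def
    by (meson finite_Pow_iff finite_subset)
  moreover have "x \<noteq> y" using xy by auto
  ultimately have "valid E Vs m M1 M2 N1 N2 (insert {x,y} P)" "card (insert {x,y} P) = Suc (card P)"
    using add_pair[OF v] xy by auto
  then show False using mx by fastforce
qed

lemma finite_P:
  assumes "agent_partition V m Vs" "graph V E" "goodP Vs m N1 N2 P"
  shows "finite P"
proof -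
  have "finite V" using assms(2) unfolding graph_def by blast
  then show ?thesis using goodP_sub[OF assms(3,1)] by (meson finite_Pow_iff finite_subset)
qed

lemma no_three:
  assumes ap: "agent_partition V m Vs" and gr: "graph V E"
    and v: "valid E Vs m M1 M2 N1 N2 P"
    and mx: "\<forall>N1' N2' P'. valid E Vs m M1 M2 N1' N2' P' \<longrightarrow> card P' \<le> card P"
    and xyz: "x \<notin> \<Union>P" "y \<notin> \<Union>P" "z \<notin> \<Union>P" "i \<in> {1..m}" "x \<in> Vs i" "y \<in> Vs i" "z \<in> Vs i"
      "x \<noteq> y" "y \<noteq> z" "x \<noteq> z"
      "sg N1 N2 x \<noteq> 0" "sg N1 N2 y = sg N1 N2 x" "sg N1 N2 z = sg N1 N2 x"
  shows False
proof -
  have m1: "matching E N1" and m2: "matching E N2" and gP: "goodP Vs m N1 N2 P"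
    and un: "N1 \<union> N2 = M1 \<union> M2" and it: "N1 \<inter> N2 = M1 \<inter> M2"
    using v unfolding valid_def by blast+
  define H where "H = N1 \<union> N2 \<union> P"
  have fV: "finite V" using gr unfolding graph_def by blast
  have HP: "H \<subseteq> Pow V" unfolding H_def
    using matching_sub[OF gr m1] matching_sub[OF gr m2] goodP_sub[OF gP ap] by blast
  have fH: "finite H" using HP fV by (meson finite_Pow_iff finite_subset)
  have fP: "finite P" using finite_P[OF ap gr gP] .
  have c2H: "\<forall>e\<in>H. card e = 2"
  proof
    fix e assume "e \<in> H"
    then consider "e \<in> N1 \<union> N2" | "e \<in> P" unfolding H_def by blast
    then show "card e = 2"
    proof cases
      case 1
      then have "e \<in> E" using m1 m2 unfolding matching_def by blast
      then show ?thesis using gr unfolding graph_def by blast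
    next
      case 2
      obtain a b j where "e = {a,b}" "a \<noteq> b" "j \<in> {1..m}" "a \<in> Vs j" "b \<in> Vs j"
        "sg N1 N2 a \<noteq> 0" "sg N1 N2 a + sg N1 N2 b = 0" by (rule goodP_pair[OF gP 2])
      then show ?thesis by simp
    qed
  qed
  have "x \<in> \<Union>N1 \<or> x \<in> \<Union>N2"
  proof (rule ccontr)
    assume "\<not> (x \<in> \<Union>N1 \<or> x \<in> \<Union>N2)"
    then have "sg N1 N2 x = 0" unfolding sg_def cov_def by simp
    then show False using xyz(11) by simp
  qed
  then obtain ex where ex: "ex \<in> N1 \<union> N2" "x \<in> ex" by blast
  have exH: "ex \<in> H" using ex unfolding H_def by blast
  define Q where "Q = (\<lambda>K. K \<subseteq> H \<and> ex \<in> K \<and> card (\<Union>K) \<le> card K + 1)"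
  have cex: "card ex = 2" using c2H exH by blast
  have Q0: "Q {ex}" unfolding Q_def using exH cex by simp
  have Qb: "\<forall>K. Q K \<longrightarrow> card K < card H + 1"
  proof (intro allI impI)
    fix K assume "Q K"
    then have "K \<subseteq> H" unfolding Q_def by blast
    then show "card K < card H + 1" using card_mono[OF fH, of K] by simp
  qed
  obtain K where QK: "Q K" and Kmax: "\<forall>K'. Q K' \<longrightarrow> card K' \<le> card K"
    using ex_has_greatest_nat[of Q "{ex}" card "card H + 1", OF Q0 Qb] by blast
  have KH: "K \<subseteq> H" and exK: "ex \<in> K" and cu: "card (\<Union>K) \<le> card K + 1" using QK unfolding Q_def by blast+
  have fK: "finite K" using KH fH finite_subset by blast
  have fe: "\<forall>e\<in>K. finite e" using KH c2H by (metis card.infinite subsetD zero_neq_numeral)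
  have fU: "finite (\<Union>K)" using fK fe by (intro finite_Union) auto
  have cl: "\<forall>f \<in> N1 \<union> N2 \<union> P. f \<inter> \<Union>K \<noteq> {} \<longrightarrow> f \<in> K"
  proof (intro ballI impI)
    fix f assume fH': "f \<in> N1 \<union> N2 \<union> P" and touch: "f \<inter> \<Union>K \<noteq> {}"
    show "f \<in> K"
    proof (rule ccontr)
      assume nf: "f \<notin> K"
      have fH2: "f \<in> H" using fH' unfolding H_def by simp
      then have "card f = 2" using c2H by blast
      then obtain a b where ab: "f = {a,b}" "a \<noteq> b" by (auto simp: card_2_iff)
      have "\<Union>(insert f K) = f \<union> \<Union>K" by blast
      moreover have "card (f \<union> \<Union>K) \<le> card (\<Union>K) + 1"
      proof (cases "a \<in> \<Union>K")
        case True
        then have "f \<union> \<Union>K = insert b (\<Union>K)" using ab by blast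
        then show ?thesis using card_insert_le_m1 fU by (simp add: card_insert_if)
      next
        case False
        then have "b \<in> \<Union>K" using touch ab by blast
        then have "f \<union> \<Union>K = insert a (\<Union>K)" using ab by blast
        then show ?thesis using fU by (simp add: card_insert_if)
      qed
      moreover have "card (insert f K) = card K + 1" using nf fK by simp
      ultimately have "Q (insert f K)" unfolding Q_def using KH fH2 exK cu by auto
      then have "card (insert f K) \<le> card K" using Kmax by blast
      then show False using nf fK by simp
    qed
  qed
  have KH': "K \<subseteq> N1 \<union> N2 \<union> P" using KH unfolding H_def .
  have xK: "x \<in> \<Union>K" using exK ex by blast
  have inK: "w \<in> \<Union>K" if w: "w \<in> Vs i" "w \<notin> \<Union>P" "sg N1 N2 w = sg N1 N2 x" "w \<noteq> x" for w
  proof (rule ccontr)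
    assume wK: "w \<notin> \<Union>K"
    let ?N1 = "(N1 - K) \<union> (N2 \<inter> K)" and ?N2 = "(N2 - K) \<union> (N1 \<inter> K)"
    note F = flip[OF m1 m2 gP KH' cl]
    have v': "valid E Vs m M1 M2 ?N1 ?N2 P" unfolding valid_def using F un it by simp
    have sx: "sg ?N1 ?N2 x = - sg N1 N2 x" using F(5) xK by simp
    have sw: "sg ?N1 ?N2 w = sg N1 N2 x" using F(5) wK w(3) by simp
    have "valid E Vs m M1 M2 ?N1 ?N2 (insert {x,w} P)" "card (insert {x,w} P) = Suc (card P)"
      using add_pair[OF v' fP xyz(1) w(2) w(4)[symmetric] xyz(4) xyz(5) w(1)] sx sw xyz(11) by simp_all
    then show False using mx by fastforce
  qed
  have yK: "y \<in> \<Union>K" using inK xyz by simp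
  have zK: "z \<in> \<Union>K" using inK xyz by simp
  have dg: "\<forall>v\<in>\<Union>K. card {e\<in>K. v\<in>e} \<le> 2" using deg2[OF m1 m2 gP KH' fK] by blast
  have c2K: "\<forall>e\<in>K. card e = 2" using KH c2H by blast
  have d1: "card {e\<in>K. x\<in>e} = 1" "card {e\<in>K. y\<in>e} = 1" "card {e\<in>K. z\<in>e} = 1"
    using deg1[OF m1 m2 _ _ KH' fK] xK yK zK xyz by simp_all
  show False
    using three_endpoints[OF fK c2K cu dg xK yK zK xyz(8-10) d1] .
qed

lemma matching_subE: "matching E N \<Longrightarrow> N \<subseteq> E"
  by (simp add: matching_def)

lemma cov_card:
  assumes "matching E N" "finite N"
  shows "cov N v = int (card {e\<in>N. v\<in>e})"
proof (cases "v \<in> \<Union>N")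
  case True
  then obtain e where e: "e \<in> N" "v \<in> e" by blast
  have "{e\<in>N. v\<in>e} = {e}" using e matching_one[OF assms(1)] by blast
  then show ?thesis using True by (simp add: cov_def)
next
  case False
  then have "{e\<in>N. v\<in>e} = {}" by blast
  then have c0: "card {e\<in>N. v\<in>e} = 0" by (simp only: card.empty)
  have "cov N v = 0" using False unfolding cov_def by simp
  then show ?thesis unfolding c0 by simp
qed

lemma cov_sum:
  assumes "matching E N1" "matching E N2" "matching E M1" "matching E M2" "finite E"
    "N1 \<union> N2 = M1 \<union> M2" "N1 \<inter> N2 = M1 \<inter> M2"
  shows "cov N1 v + cov N2 v = cov M1 v + cov M2 v"
proof -
  have sub: "N1 \<subseteq> E" "N2 \<subseteq> E" "M1 \<subseteq> E" "M2 \<subseteq> E" using matching_subE[OF assms(1)] matching_subE[OF assms(2)] matching_subE[OF assms(3)] matching_subE[OF assms(4)] by simp_all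
  have f: "finite N1" "finite N2" "finite M1" "finite M2"
    using finite_subset[OF sub(1) assms(5)] finite_subset[OF sub(2) assms(5)]
      finite_subset[OF sub(3) assms(5)] finite_subset[OF sub(4) assms(5)] by simp_all
  have "\<And>A B. finite A \<Longrightarrow> finite B \<Longrightarrow> card {e\<in>A. v\<in>e} + card {e\<in>B. v\<in>e} =
      card {e\<in>A \<union> B. v\<in>e} + card {e\<in>A \<inter> B. v\<in>e}"
  proof -
    fix A B :: "'a set set" assume "finite A" "finite B"
    have "card {e\<in>A. v\<in>e} + card {e\<in>B. v\<in>e} = card ({e\<in>A. v\<in>e} \<union> {e\<in>B. v\<in>e}) + card ({e\<in>A. v\<in>e} \<inter> {e\<in>B. v\<in>e})"
      by (rule card_Un_Int) (simp_all add: \<open>finite A\<close> \<open>finite B\<close>)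
    moreover have "{e\<in>A. v\<in>e} \<union> {e\<in>B. v\<in>e} = {e\<in>A \<union> B. v\<in>e}" by blast
    moreover have "{e\<in>A. v\<in>e} \<inter> {e\<in>B. v\<in>e} = {e\<in>A \<inter> B. v\<in>e}" by blast
    ultimately show "card {e\<in>A. v\<in>e} + card {e\<in>B. v\<in>e} =
      card {e\<in>A \<union> B. v\<in>e} + card {e\<in>A \<inter> B. v\<in>e}" by simp
  qed
  note X = this
  have "card {e\<in>N1. v\<in>e} + card {e\<in>N2. v\<in>e} = card {e\<in>M1. v\<in>e} + card {e\<in>M2. v\<in>e}"
    using X[OF f(1,2)] X[OF f(3,4)] assms(6,7) by simp
  then show ?thesis
    using cov_card[OF assms(1) f(1)] cov_card[OF assms(2) f(2)] cov_card[OF assms(3) f(3)] cov_card[OF assms(4) f(4)]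
    by simp
qed

lemma util_sum:
  assumes "finite A"
  shows "int (utility A N) = (\<Sum>v\<in>A. cov N v)"
proof -
  have "(\<Sum>v\<in>A. cov N v) = (\<Sum>v\<in>A. of_bool (v \<in> \<Union>N))"
    by (rule sum.cong) (auto simp: cov_def)
  also have "\<dots> = int (card (A \<inter> {v. v \<in> \<Union>N}))" using assms by simp
  also have "A \<inter> {v. v \<in> \<Union>N} = A \<inter> \<Union>N" by blast
  finally show ?thesis unfolding utility_def by simp
qed

lemma sg_vals: "sg N1 N2 v = of_bool (sg N1 N2 v = 1) - of_bool (sg N1 N2 v = -1)"
  unfolding sg_def cov_def by auto

lemma three_elems:
  assumes "3 \<le> card S"
  obtains x y z where "x \<in> S" "y \<in> S" "z \<in> S" "x \<noteq> y" "y \<noteq> z" "x \<noteq> z"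
proof -
  obtain T where T: "T \<subseteq> S" "card T = 3" using obtain_subset_with_card_n[OF assms] by metis
  then obtain x y z where "T = {x,y,z}" "x \<noteq> y" "y \<noteq> z" "x \<noteq> z" by (auto simp: card_3_iff)
  then show ?thesis using that T(1) by blast
qed

lemma pairs_cancel:
  assumes ap: "agent_partition V m Vs" and gP: "goodP Vs m N1 N2 P" and fP: "finite P"
    and i: "i \<in> {1..m}"
  shows "(\<Sum>v\<in>Vs i \<inter> \<Union>P. sg N1 N2 v) = 0"
proof -
  define Q where "Q = {p\<in>P. p \<subseteq> Vs i}"
  have dis: "\<forall>a\<in>{1..m}. \<forall>b\<in>{1..m}. a \<noteq> b \<longrightarrow> Vs a \<inter> Vs b = {}"
    using ap unfolding agent_partition_def by blast
  have eq: "Vs i \<inter> \<Union>P = \<Union>Q"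
  proof (intro equalityI subsetI)
    fix v assume "v \<in> Vs i \<inter> \<Union>P"
    then obtain p where p: "p \<in> P" "v \<in> p" "v \<in> Vs i" by blast
    obtain a b j where ab: "p = {a,b}" "a \<noteq> b" "j \<in> {1..m}" "a \<in> Vs j" "b \<in> Vs j"
        "sg N1 N2 a \<noteq> 0" "sg N1 N2 a + sg N1 N2 b = 0" by (rule goodP_pair[OF gP p(1)])
    have "v \<in> Vs j" using ab p by blast
    then have "j = i" using dis i ab(3) p(3) by blast
    then have "p \<in> Q" unfolding Q_def using p ab by blast
    then show "v \<in> \<Union>Q" using p by blast
  next
    fix v assume "v \<in> \<Union>Q" then show "v \<in> Vs i \<inter> \<Union>P" unfolding Q_def by blast
  qed
  have fQ: "finite Q" unfolding Q_def using fP by simp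
  have fin: "\<forall>p\<in>Q. finite p"
  proof
    fix p assume "p \<in> Q"
    then have "p \<in> P" unfolding Q_def by blast
    obtain a b j where "p = {a,b}" "a \<noteq> b" "j \<in> {1..m}" "a \<in> Vs j" "b \<in> Vs j"
        "sg N1 N2 a \<noteq> 0" "sg N1 N2 a + sg N1 N2 b = 0" by (rule goodP_pair[OF gP \<open>p \<in> P\<close>])
    then show "finite p" by simp
  qed
  have dQ: "\<forall>p\<in>Q. \<forall>q\<in>Q. p \<noteq> q \<longrightarrow> p \<inter> q = {}"
    using goodP_disj[OF gP] unfolding Q_def by blast
  have "(\<Sum>v\<in>\<Union>Q. sg N1 N2 v) = (\<Sum>p\<in>Q. \<Sum>v\<in>p. sg N1 N2 v)"
    using sum.Union_disjoint[OF fin dQ] by simp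
  also have "\<dots> = 0"
  proof (rule sum.neutral, rule ballI)
    fix p assume "p \<in> Q"
    then have "p \<in> P" unfolding Q_def by blast
    obtain a b j where "p = {a,b}" "a \<noteq> b" "j \<in> {1..m}" "a \<in> Vs j" "b \<in> Vs j"
        "sg N1 N2 a \<noteq> 0" "sg N1 N2 a + sg N1 N2 b = 0" by (rule goodP_pair[OF gP \<open>p \<in> P\<close>])
    then show "(\<Sum>v\<in>p. sg N1 N2 v) = 0" by simp
  qed
  finally show ?thesis using eq by simp
qed

theorem lemma1:
  fixes V :: "'a set" and E :: "'a set set" and m :: nat and Vs :: "nat \<Rightarrow> 'a set"
    and M1 M2 :: "'a set set"
  assumes "graph V E"
    and "agent_partition V m Vs"
    and "matching E M1" and "matching E M2"
  shows "\<exists>N1 N2. matching E N1 \<and> matching E N2 \<and>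
           (\<forall>i\<in>{1..m}.
              \<bar>int (utility (Vs i) N1) - int (utility (Vs i) N2)\<bar> \<le> 2 \<and>
              utility (Vs i) N1 + utility (Vs i) N2 = utility (Vs i) M1 + utility (Vs i) M2)"
proof -
  note gr = assms(1) and ap = assms(2)
  have fV: "finite V" using gr unfolding graph_def by blast
  have fE: "finite E" using gr fV unfolding graph_def
    by (meson Pow_iff finite_Pow_iff finite_subset subsetI)
  define R where "R = (\<lambda>T. valid E Vs m M1 M2 (fst T) (fst (snd T)) (snd (snd T)))"
  have R0: "R (M1, M2, {})" unfolding R_def valid_def goodP_def using assms(3,4) by simp
  have Rb: "\<forall>T. R T \<longrightarrow> card (snd (snd T)) < card (Pow V) + 1"
  proof (intro allI impI)
    fix T assume "R T"
    then have "goodP Vs m (fst T) (fst (snd T)) (snd (snd T))" unfolding R_def valid_def by simp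
    then have "snd (snd T) \<subseteq> Pow V" using goodP_sub[OF _ ap] by simp
    then show "card (snd (snd T)) < card (Pow V) + 1" using card_mono[OF finite_Pow_iff[THEN iffD2, OF fV], of "snd (snd T)"] by simp
  qed
  obtain T where RT: "R T" and Tmax: "\<forall>T'. R T' \<longrightarrow> card (snd (snd T')) \<le> card (snd (snd T))"
    using ex_has_greatest_nat[of R "(M1, M2, {})" "\<lambda>T. card (snd (snd T))" "card (Pow V) + 1", OF R0 Rb] by blast
  obtain N1 N2 P where T: "T = (N1, N2, P)" by (cases T) auto
  have v: "valid E Vs m M1 M2 N1 N2 P" using RT T unfolding R_def by simp
  have mx: "\<forall>N1' N2' P'. valid E Vs m M1 M2 N1' N2' P' \<longrightarrow> card P' \<le> card P"
  proof (intro allI impI)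
    fix N1' N2' P' assume "valid E Vs m M1 M2 N1' N2' P'"
    then have "R (N1', N2', P')" unfolding R_def by simp
    then show "card P' \<le> card P" using Tmax T by fastforce
  qed
  have m1: "matching E N1" and m2: "matching E N2" and gP: "goodP Vs m N1 N2 P"
    and un: "N1 \<union> N2 = M1 \<union> M2" and it: "N1 \<inter> N2 = M1 \<inter> M2"
    using v unfolding valid_def by blast+
  have fP: "finite P" using finite_P[OF ap gr gP] .
  show ?thesis
  proof (intro exI conjI ballI)
    show "matching E N1" "matching E N2" using m1 m2 .
  next
    fix i assume i: "i \<in> {1..m}"
    have fVi: "finite (Vs i)"
    proof -
      have "Vs i \<subseteq> V" using ap i unfolding agent_partition_def by blast
      then show ?thesis using fV finite_subset by blast
    qed
    have "int (utility (Vs i) N1 + utility (Vs i) N2) = (\<Sum>v\<in>Vs i. cov N1 v + cov N2 v)"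
      using util_sum[OF fVi, of N1] util_sum[OF fVi, of N2] by (simp add: sum.distrib)
    also have "\<dots> = (\<Sum>v\<in>Vs i. cov M1 v + cov M2 v)"
      using cov_sum[OF m1 m2 assms(3,4) fE un it] by simp
    also have "\<dots> = int (utility (Vs i) M1 + utility (Vs i) M2)"
      using util_sum[OF fVi, of M1] util_sum[OF fVi, of M2] by (simp add: sum.distrib)
    finally show "utility (Vs i) N1 + utility (Vs i) N2 = utility (Vs i) M1 + utility (Vs i) M2"
      by linarith
    define U where "U = Vs i - \<Union>P"
    have fU: "finite U" unfolding U_def using fVi by simp
    have "int (utility (Vs i) N1) - int (utility (Vs i) N2) = (\<Sum>v\<in>Vs i. sg N1 N2 v)"
      using util_sum[OF fVi, of N1] util_sum[OF fVi, of N2] by (simp add: sg_def sum_subtractf)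
    also have "\<dots> = (\<Sum>v\<in>Vs i \<inter> \<Union>P. sg N1 N2 v) + (\<Sum>v\<in>U. sg N1 N2 v)"
      unfolding U_def by (rule sum.Int_Diff[OF fVi])
    also have "(\<Sum>v\<in>Vs i \<inter> \<Union>P. sg N1 N2 v) = 0" using pairs_cancel[OF ap gP fP i] .
    also have "(\<Sum>v\<in>U. sg N1 N2 v) = (\<Sum>v\<in>U. of_bool (sg N1 N2 v = 1) - of_bool (sg N1 N2 v = -1))"
      by (rule sum.cong[OF refl]) (rule sg_vals)
    also have "\<dots> = int (card (U \<inter> {v. sg N1 N2 v = 1})) - int (card (U \<inter> {v. sg N1 N2 v = -1}))"
      using fU by (simp add: sum_subtractf)
    finally have eqd: "int (utility (Vs i) N1) - int (utility (Vs i) N2) =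
        int (card (U \<inter> {v. sg N1 N2 v = 1})) - int (card (U \<inter> {v. sg N1 N2 v = -1}))" by simp
    have notboth: "U \<inter> {v. sg N1 N2 v = 1} = {} \<or> U \<inter> {v. sg N1 N2 v = -1} = {}"
    proof (rule ccontr)
      assume "\<not> ?thesis"
      then obtain x y where "x \<in> U" "sg N1 N2 x = 1" "y \<in> U" "sg N1 N2 y = -1" by blast
      then show False using no_opp[OF ap gr v mx, of x y i] i unfolding U_def by blast
    qed
    have le2: "card (U \<inter> {v. sg N1 N2 v = s}) \<le> 2" if s: "s \<noteq> 0" for s
    proof (rule ccontr)
      assume "\<not> ?thesis"
      then have "3 \<le> card (U \<inter> {v. sg N1 N2 v = s})" by simp
      then obtain x y z where xyz: "x \<in> U \<inter> {v. sg N1 N2 v = s}" "y \<in> U \<inter> {v. sg N1 N2 v = s}"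
          "z \<in> U \<inter> {v. sg N1 N2 v = s}" "x \<noteq> y" "y \<noteq> z" "x \<noteq> z"
        by (rule three_elems)
      then show False using no_three[OF ap gr v mx, of x y z i] i s unfolding U_def by auto
    qed
    show "\<bar>int (utility (Vs i) N1) - int (utility (Vs i) N2)\<bar> \<le> 2"
      using eqd notboth le2[of 1] le2[of "-1"] by auto
  qed
qed

end
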